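(* Let $\mathbf{B}\in\dot{\mathbb{P}}(\mathbb{L}(\mathbf{C}))$ with $|\mathbf{B}|=|\mathbf{C}|$, and suppose that all, or all but one, of the literals $L\in\mathbf{B}$ have a positive monotonic effect on $D$ relative to $\mathbf{C}$. Then $\mathbf{B}$ is singular for $\mathcal{D}(\mathbf{C},\Omega)$ if and only if $\mathbf{B}$ is irreducible for $\mathcal{D}(\mathbf{C},\Omega)$.
   Context: Events are binary random variables on a population $\Omega$; $\overline{X}=1-X$; $\mathbb{L}(\mathbf{C})=\mathbf{C}\cup\{\overline{X}:X\in\mathbf{C}\}$; $\dot{\mathbb{P}}(\mathbb{L}(\mathbf{C}))$ is the set of subsets of $\mathbb{L}(\mathbf{C})$ not containing both $X$ and $\overline{X}$; $(L)_{\mathbf{c}}$ is the value of literal $L$ under assignment $\mathbf{c}$; $\bigwedge(\mathbf{B})=\min_{L\in\mathbf{B}}L$. Potential outcomes $\mathcal{D}(\mathbf{C},\Omega)$: $D_{\mathbf{c}}(\omega)\in\{0,1\}$. A literal $L$ has a positive monotonic effect on $D$ relative to $\mathbf{C}$ if for all $\omega$ and assignments $\mathbf{c},\mathbf{c}'$ differing only in the variable underlying $L$ with $(L)_{\mathbf{c}}=1,(L)_{\mathbf{c}'}=0$, $D_{\mathbf{c}}(\omega)\ge D_{\mathbf{c}'}(\omega)$. $\mathbf{B}$ is a sufficient cause for $D$ relative to $\mathbf{C}$ for $\omega^*$ if some $\mathbf{c}^*$ has $(\bigwedge(\mathbf{B}))_{\mathbf{c}^*}=1$ and $D_{\mathbf{c}}(\omega^*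 )=1$ whenever $(\bigwedge(\mathbf{B}))_{\mathbf{c}}=1$; minimal if no proper subset is such; singular for $\omega^*$ if minimal and no other $\mathbf{B}'\in\dot{\mathbb{P}}(\mathbb{L}(\mathbf{C}))$ is a minimal sufficient cause for $\omega^*$; singular for $\mathcal{D}(\mathbf{C},\Omega)$ if singular for some $\omega^*$. A sufficient cause representation $(\mathbf{A},\mathfrak{B})$ for $\mathcal{D}(\mathbf{C},\Omega)$: binary random variables $\mathbf{A}=\langle A_1,\dots,A_p\rangle$ on $\Omega$ unaffected by interventions on $\mathbf{C}$ and $\mathfrak{B}=\langle\mathbf{B}_1,\dots,\mathbf{B}_p\rangle$, $\mathbf{B}_i\in\dot{\mathbb{P}}(\mathbb{L}(\mathbf{C}))$, with $D_{\mathbf{c}}(\omega)=1$ iff some $j$ has $A_j(\omega)=1$ and $(\bigwedge(\mathbf{B}_j))_{\mathbf{c}}=1$. $\mathbf{B}$ is irreducible for $\mathcal{D}(\mathbf{C},\Omega)$ if every such representation has some $\mathbf{B}_i\supseteq\mathbf{B}$. *)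

theory Defs
  imports Main
begin

datatype 'v lit = Pos 'v | Neg 'v

fun lit_var :: "'v lit \<Rightarrow> 'v" where
  "lit_var (Pos x) = x" | "lit_var (Neg x) = x"

fun lit_val :: "('v \<Rightarrow> bool) \<Rightarrow> 'v lit \<Rightarrow> bool" where
  "lit_val c (Pos x) = c x" | "lit_val c (Neg x) = (\<not> c x)"

text \<open>Assignments to C (values outside C fixed to False, so that assignments
  to C correspond bijectively to these functions).\<close>
definition asg :: "'v set \<Rightarrow> ('v \<Rightarrow> bool) set" where
  "asg C = {c. \<forall>v. v \<notin> C \<longrightarrow> c v = False}"

definition Lits :: "'v set \<Rightarrow> 'v lit set" where
  "Lits C = Pos ` C \<union> Neg ` C"

definition Pdot :: "'v set \<Rightarrow> 'v lit set set" where
  "Pdot C = {B. B \<subseteq> Lits C \<and> \<not> (\<exists>x. Pos x \<in> B \<and> Neg x \<in> B)}"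

definition conj_val :: "('v \<Rightarrow> bool) \<Rightarrow> 'v lit set \<Rightarrow> bool" where
  "conj_val c B = (\<forall>L\<in>B. lit_val c L)"

definition pos_mono ::
  "'v set \<Rightarrow> 'w set \<Rightarrow> (('v \<Rightarrow> bool) \<Rightarrow> 'w \<Rightarrow> bool) \<Rightarrow> 'v lit \<Rightarrow> bool" where
  "pos_mono C \<Omega> D L = (\<forall>\<omega>\<in>\<Omega>. \<forall>c\<in>asg C. \<forall>c'\<in>asg C.
      (\<forall>v. v \<noteq> lit_var L \<longrightarrow> c v = c' v) \<longrightarrow> lit_val c L \<longrightarrow> \<not> lit_val c' L
      \<longrightarrow> (D c' \<omega> \<longrightarrow> D c \<omega>))"

definition suff_cause ::
  "'v set \<Rightarrow> (('v \<Rightarrow> bool) \<Rightarrow> 'w \<Rightarrow> bool) \<Rightarrow> 'v lit set \<Rightarrow> 'w \<Rightarrow> bool" where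
  "suff_cause C D B \<omega> = (B \<in> Pdot C \<and> (\<exists>c\<in>asg C. conj_val c B)
      \<and> (\<forall>c\<in>asg C. conj_val c B \<longrightarrow> D c \<omega>))"

definition min_suff_cause ::
  "'v set \<Rightarrow> (('v \<Rightarrow> bool) \<Rightarrow> 'w \<Rightarrow> bool) \<Rightarrow> 'v lit set \<Rightarrow> 'w \<Rightarrow> bool" where
  "min_suff_cause C D B \<omega> = (suff_cause C D B \<omega> \<and> (\<forall>B'. B' \<subset> B \<longrightarrow> \<not> suff_cause C D B' \<omega>))"

definition singular_for ::
  "'v set \<Rightarrow> (('v \<Rightarrow> bool) \<Rightarrow> 'w \<Rightarrow> bool) \<Rightarrow> 'v lit set \<Rightarrow> 'w \<Rightarrow> bool" where
  "singular_for C D B \<omega> = (min_suff_cause C D B \<omega> \<and>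
      (\<forall>B'\<in>Pdot C. B' \<noteq> B \<longrightarrow> \<not> min_suff_cause C D B' \<omega>))"

definition singular ::
  "'v set \<Rightarrow> 'w set \<Rightarrow> (('v \<Rightarrow> bool) \<Rightarrow> 'w \<Rightarrow> bool) \<Rightarrow> 'v lit set \<Rightarrow> bool" where
  "singular C \<Omega> D B = (\<exists>\<omega>\<in>\<Omega>. singular_for C D B \<omega>)"

text \<open>A sufficient cause representation (A, \<BB>) as a list of pairs (A_j, B_j);
  each A_j :: 'w \<Rightarrow> bool does not depend on the assignment c.\<close>
definition suff_rep ::
  "'v set \<Rightarrow> 'w set \<Rightarrow> (('v \<Rightarrow> bool) \<Rightarrow> 'w \<Rightarrow> bool) \<Rightarrow> (('w \<Rightarrow> bool) \<times> 'v lit set) list \<Rightarrow> bool" where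
  "suff_rep C \<Omega> D R = ((\<forall>(A, B)\<in>set R. B \<in> Pdot C) \<and>
      (\<forall>\<omega>\<in>\<Omega>. \<forall>c\<in>asg C. D c \<omega> \<longleftrightarrow> (\<exists>(A, B)\<in>set R. A \<omega> \<and> conj_val c B)))"

definition irreducible ::
  "'v set \<Rightarrow> 'w set \<Rightarrow> (('v \<Rightarrow> bool) \<Rightarrow> 'w \<Rightarrow> bool) \<Rightarrow> 'v lit set \<Rightarrow> bool" where
  "irreducible C \<Omega> D B = (\<forall>R. suff_rep C \<Omega> D R \<longrightarrow> (\<exists>(A, B')\<in>set R. B \<subseteq> B'))"

end

theory Submission
  imports Defs
begin

definition cOf :: "'v lit set \<Rightarrow> 'v \<Rightarrow> bool" where "cOf B v = (Pos v \<in> B)"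
definition full :: "'v set \<Rightarrow> ('v \<Rightarrow> bool) \<Rightarrow> 'v lit set" where
  "full C c = (\<lambda>v. if c v then Pos v else Neg v) ` C"
definition flip :: "'v \<Rightarrow> ('v \<Rightarrow> bool) \<Rightarrow> 'v \<Rightarrow> bool" where "flip v c = c(v := \<not> c v)"
definition litB :: "'v lit set \<Rightarrow> 'v \<Rightarrow> 'v lit" where
  "litB B v = (if cOf B v then Pos v else Neg v)"
definition cov :: "'v set \<Rightarrow> 'v lit set \<Rightarrow> bool" where
  "cov C B = (\<forall>v\<in>C. Pos v \<in> B \<or> Neg v \<in> B)"

lemma Lits_finite: "finite C \<Longrightarrow> finite (Lits C)"
  by (simp add: Lits_def)

lemma cover:
  assumes "finite C" "B \<in> Pdot C" "card B = card C"
  shows "cov C B"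
proof -
  have sub: "B \<subseteq> Lits C" "\<not> (\<exists>x. Pos x \<in> B \<and> Neg x \<in> B)" using assms(2) by (auto simp: Pdot_def)
  have inj: "inj_on lit_var B"
  proof (rule inj_onI)
    fix x y assume "x \<in> B" "y \<in> B" "lit_var x = lit_var y"
    then show "x = y" using sub(2) by (cases x; cases y) auto
  qed
  have fB: "finite B" using sub(1) Lits_finite[OF assms(1)] finite_subset by blast
  have im: "lit_var ` B \<subseteq> C" using sub(1) by (auto simp: Lits_def)
  have "card (lit_var ` B) = card C" using card_image[OF inj] assms(3) by simp
  then have "lit_var ` B = C" using card_subset_eq[OF assms(1) im] by simp
  then show ?thesis unfolding cov_def
  proof (intro ballI)
    fix v assume "v \<in> C"
    then obtain L where "L \<in> B" "lit_var L = v" using \<open>lit_var ` B = C\<close> by blast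
    then show "Pos v \<in> B \<or> Neg v \<in> B" by (cases L) auto
  qed
qed

lemma Pdot_in: "B \<in> Pdot C \<Longrightarrow> Pos v \<in> B \<Longrightarrow> v \<in> C"
  by (auto simp: Pdot_def Lits_def)
lemma Pdot_in2: "B \<in> Pdot C \<Longrightarrow> Neg v \<in> B \<Longrightarrow> v \<in> C"
  by (auto simp: Pdot_def Lits_def)
lemma Pdot_nc: "B \<in> Pdot C \<Longrightarrow> Pos v \<in> B \<Longrightarrow> Neg v \<in> B \<Longrightarrow> False"
  by (auto simp: Pdot_def)

lemma Pdot_sub: "B \<in> Pdot C \<Longrightarrow> X \<subseteq> B \<Longrightarrow> X \<in> Pdot C"
  by (auto simp: Pdot_def)

lemma cOf_asg: "B \<in> Pdot C \<Longrightarrow> cOf B \<in> asg C"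
  by (auto simp: asg_def cOf_def dest: Pdot_in)

lemma cOf_sat: "B \<in> Pdot C \<Longrightarrow> conj_val (cOf B) B"
  unfolding conj_val_def
proof
  fix L assume "B \<in> Pdot C" "L \<in> B"
  then show "lit_val (cOf B) L" by (cases L) (auto simp: cOf_def dest: Pdot_nc)
qed

lemma sat_iff:
  assumes "B \<in> Pdot C" "cov C B" "c \<in> asg C"
  shows "conj_val c B \<longleftrightarrow> c = cOf B"
proof
  assume h: "conj_val c B"
  show "c = cOf B"
  proof
    fix v show "c v = cOf B v"
    proof (cases "v \<in> C")
      case True
      then have "Pos v \<in> B \<or> Neg v \<in> B" using assms(2) by (auto simp: cov_def)
      then show ?thesis using h assms(1) by (auto simp: conj_val_def cOf_def dest: Pdot_nc)
    next
      case False
      then show ?thesis using assms(3) by (auto simp: asg_def cOf_def dest: Pdot_in[OF assms(1)])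
    qed
  qed
next
  assume "c = cOf B" then show "conj_val c B" using cOf_sat[OF assms(1)] by simp
qed

lemma full_props:
  assumes "c \<in> asg C"
  shows "full C c \<in> Pdot C" "cov C (full C c)" "cOf (full C c) = c"
  using assms
    apply (auto simp: full_def Pdot_def Lits_def cov_def split: if_splits)[2]
  using assms by (auto simp: full_def cOf_def asg_def image_iff intro!: ext)

lemma full_sat_iff: "c \<in> asg C \<Longrightarrow> c' \<in> asg C \<Longrightarrow> conj_val c' (full C c) \<longleftrightarrow> c' = c"
  using sat_iff[OF full_props(1,2)] full_props(3) by metis

lemma litB_in: "B \<in> Pdot C \<Longrightarrow> cov C B \<Longrightarrow> v \<in> C \<Longrightarrow> litB B v \<in> B"
  by (auto simp: litB_def cOf_def cov_def)

lemma litB_eq: "B \<in> Pdot C \<Longrightarrow> L \<in> B \<Longrightarrow> litB B (lit_var L) = L"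
  by (cases L) (auto simp: litB_def cOf_def dest: Pdot_nc)

lemma flip_asg: "c \<in> asg C \<Longrightarrow> v \<in> C \<Longrightarrow> flip v c \<in> asg C"
  by (auto simp: asg_def flip_def)

lemma lit_var_in: "B \<in> Pdot C \<Longrightarrow> L \<in> B \<Longrightarrow> lit_var L \<in> C"
  by (cases L) (auto dest: Pdot_in Pdot_in2)

lemma sat_minus_iff:
  assumes "B \<in> Pdot C" "cov C B" "c \<in> asg C" "L \<in> B"
  shows "conj_val c (B - {L}) \<longleftrightarrow> c = cOf B \<or> c = flip (lit_var L) (cOf B)"
proof
  assume h: "conj_val c (B - {L})"
  have agree: "c w = cOf B w" if "w \<noteq> lit_var L" for w
  proof (cases "w \<in> C")
    case True
    then have "Pos w \<in> B \<or> Neg w \<in> B" using assms(2) by (auto simp: cov_def)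
    moreover have "Pos w \<noteq> L" "Neg w \<noteq> L" using that by auto
    moreover have "Pos w \<in> B \<Longrightarrow> c w" using h[unfolded conj_val_def, rule_format, of "Pos w"] \<open>Pos w \<noteq> L\<close> by auto
    moreover have "Neg w \<in> B \<Longrightarrow> \<not> c w" using h[unfolded conj_val_def, rule_format, of "Neg w"] \<open>Neg w \<noteq> L\<close> by auto
    ultimately show ?thesis using assms(1) by (auto simp: cOf_def dest: Pdot_nc)
  next
    case False
    then show ?thesis using assms(3) by (auto simp: asg_def cOf_def dest: Pdot_in[OF assms(1)])
  qed
  show "c = cOf B \<or> c = flip (lit_var L) (cOf B)"
  proof (cases "c (lit_var L) = cOf B (lit_var L)")
    case True
    then have "c = cOf B" using agree by (intro ext) metis
    then show ?thesis by simp
  next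
    case False
    then have "c = flip (lit_var L) (cOf B)" using agree by (intro ext) (auto simp: flip_def)
    then show ?thesis by simp
  qed
next
  assume "c = cOf B \<or> c = flip (lit_var L) (cOf B)"
  then show "conj_val c (B - {L})"
  proof
    assume "c = cOf B" then show ?thesis using cOf_sat[OF assms(1)] by (auto simp: conj_val_def)
  next
    assume c: "c = flip (lit_var L) (cOf B)"
    show ?thesis unfolding conj_val_def
    proof
      fix L' assume L': "L' \<in> B - {L}"
      have "lit_var L' \<noteq> lit_var L"
      proof
        assume "lit_var L' = lit_var L"
        then have "litB B (lit_var L') = litB B (lit_var L)" by simp
        then show False using litB_eq[OF assms(1)] L' assms(4) by auto
      qed
      moreover have "lit_val (cOf B) L'" using cOf_sat[OF assms(1)] L' by (auto simp: conj_val_def)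
      ultimately show "lit_val c L'" using c by (cases L') (auto simp: flip_def)
    qed
  qed
qed


lemma dist:
  assumes fC: "finite C" and BP: "B \<in> Pdot C" and cv: "cov C B" and om: "\<omega> \<in> \<Omega>"
    and mh: "\<forall>v1\<in>C. \<forall>v2\<in>C. v1 \<noteq> v2 \<longrightarrow> pos_mono C \<Omega> D (litB B v1) \<or> pos_mono C \<Omega> D (litB B v2)"
  shows "c \<in> asg C \<Longrightarrow> D c \<omega> \<Longrightarrow> c \<noteq> cOf B \<Longrightarrow> \<exists>L\<in>B. D (flip (lit_var L) (cOf B)) \<omega>"
proof (induction "card {v\<in>C. c v \<noteq> cOf B v}" arbitrary: c rule: less_induct)
  case less
  define S where "S = {v\<in>C. c v \<noteq> cOf B v}"
  have fS: "finite S" using fC by (simp add: S_def)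
  have cB: "cOf B \<in> asg C" using cOf_asg[OF BP] .
  have agree: "c w = cOf B w" if "w \<notin> S" for w
    using that less.prems(1) cB by (auto simp: S_def asg_def)
  have Sne: "S \<noteq> {}"
  proof
    assume "S = {}" then have "c = cOf B" using agree by (intro ext) auto
    then show False using less.prems(3) by simp
  qed
  show ?case
  proof (cases "card S = 1")
    case True
    then obtain v where Sv: "S = {v}" using card_1_singletonE by blast
    then have vC: "v \<in> C" and nv: "c v \<noteq> cOf B v" by (auto simp: S_def)
    have "c = flip v (cOf B)" using agree Sv nv by (intro ext) (auto simp: flip_def)
    moreover have "litB B v \<in> B" using litB_in[OF BP cv vC] .
    moreover have "lit_var (litB B v) = v" by (simp add: litB_def)
    ultimately show ?thesis using less.prems(2) by metis
  next
    case False
    then have c2: "card S \<ge> 2" using Sne fS by (metis One_nat_def card_0_eq less_2_cases_iff not_less)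
    obtain v1 where v1: "v1 \<in> S" using Sne by blast
    have "card (S - {v1}) \<ge> 1" using c2 v1 fS by simp
    then obtain v2 where v2: "v2 \<in> S - {v1}" by (metis One_nat_def card.empty ex_in_conv not_less_eq_eq le_zero_eq)
    then have "v1 \<noteq> v2" "v1 \<in> C" "v2 \<in> C" using v1 by (auto simp: S_def)
    then obtain w where w: "w \<in> S" "pos_mono C \<Omega> D (litB B w)" using mh v1 v2 by blast
    define c' where "c' = c(w := cOf B w)"
    have S': "{v\<in>C. c' v \<noteq> cOf B v} = S - {w}" by (auto simp: S_def c'_def)
    have lt: "card (S - {w}) < card S" using fS w(1) by (rule card_Diff1_less)
    have c'asg: "c' \<in> asg C" using less.prems(1) cB by (auto simp: asg_def c'_def)
    have "card (S - {w}) \<ge> 1" using c2 w fS by simp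
    then have "S - {w} \<noteq> {}" by (metis card.empty not_one_le_zero)
    then have c'ne: "c' \<noteq> cOf B" using S' by auto
    have wC: "w \<in> C" and nw: "c w \<noteq> cOf B w" using w by (auto simp: S_def)
    have lv: "lit_var (litB B w) = w" by (simp add: litB_def)
    have "lit_val c' (litB B w)" by (simp add: litB_def c'_def)
    moreover have "\<not> lit_val c (litB B w)" using nw by (auto simp: litB_def)
    moreover have "\<forall>v. v \<noteq> lit_var (litB B w) \<longrightarrow> c' v = c v" using lv by (simp add: c'_def)
    ultimately have "D c' \<omega>" using w(2) om c'asg less.prems(1,2) unfolding pos_mono_def by blast
    then show ?thesis using less.hyps[of c'] S' lt c'asg c'ne S_def by auto
  qed
qed

lemma sing_to_char:
  assumes fC: "finite C" and BP: "B \<in> Pdot C" and cv: "cov C B" and sf: "singular_for C D B \<omega>"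
  shows "D (cOf B) \<omega>" "\<forall>c\<in>asg C. D c \<omega> \<longrightarrow> c = cOf B"
proof -
  have ms: "min_suff_cause C D B \<omega>" using sf by (simp add: singular_for_def)
  then show "D (cOf B) \<omega>" using cOf_asg[OF BP] cOf_sat[OF BP]
    by (auto simp: min_suff_cause_def suff_cause_def)
  show "\<forall>c\<in>asg C. D c \<omega> \<longrightarrow> c = cOf B"
  proof (intro ballI impI, rule ccontr)
    fix c assume c: "c \<in> asg C" "D c \<omega>" "c \<noteq> cOf B"
    let ?F = "full C c"
    have sF: "suff_cause C D ?F \<omega>" unfolding suff_cause_def
      using full_props(1)[OF c(1)] full_sat_iff[OF c(1)] c by blast
    have finF: "finite ?F" using fC by (simp add: full_def)
    define P where "P = (\<lambda>n. \<exists>X. X \<subseteq> ?F \<and> suff_cause C D X \<omega> \<and> card X = n)"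
    have "P (card ?F)" using sF by (auto simp: P_def)
    then obtain X where X: "X \<subseteq> ?F" "suff_cause C D X \<omega>" "card X = (LEAST n. P n)"
      by (metis (mono_tags, lifting) LeastI P_def)
    have minX: "min_suff_cause C D X \<omega>" unfolding min_suff_cause_def
    proof (intro conjI allI impI X(2) notI)
      fix Y assume Y: "Y \<subset> X" "suff_cause C D Y \<omega>"
      have finX: "finite X" using X(1) finF finite_subset by blast
      have "card Y < card X" using Y(1) finX psubset_card_mono by blast
      moreover have "Y \<subseteq> ?F" using Y(1) X(1) by auto
      then have "P (card Y)" unfolding P_def using Y(2) by blast
      ultimately show False using X(3) Least_le[of P "card Y"] by simp
    qed
    have XP: "X \<in> Pdot C" using X(2) by (simp add: suff_cause_def)
    have "X \<noteq> B"
    proof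
      assume "X = B"
      then have "conj_val c B" using X(1) full_sat_iff[OF c(1) c(1)] by (auto simp: conj_val_def)
      then show False using sat_iff[OF BP cv c(1)] c(3) by simp
    qed
    then show False using sf XP minX by (auto simp: singular_for_def)
  qed
qed

lemma char_to_sing:
  assumes fC: "finite C" and BP: "B \<in> Pdot C" and cv: "cov C B"
    and h1: "D (cOf B) \<omega>" and h2: "\<forall>c\<in>asg C. D c \<omega> \<longrightarrow> c = cOf B"
  shows "singular_for C D B \<omega>"
proof -
  have cB: "cOf B \<in> asg C" using cOf_asg[OF BP] .
  have sB: "suff_cause C D B \<omega>" unfolding suff_cause_def
    using BP cB cOf_sat[OF BP] sat_iff[OF BP cv] h1 by blast
  have nsub: "\<not> suff_cause C D Y \<omega>" if yb: "Y \<subset> B" for Y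
  proof
    assume sY: "suff_cause C D Y \<omega>"
    obtain L where L: "L \<in> B" "L \<notin> Y" using psubset_imp_ex_mem[OF yb] by blast
    have YB: "Y \<subseteq> B - {L}" using yb L by auto
    have fa: "flip (lit_var L) (cOf B) \<in> asg C" using flip_asg[OF cB lit_var_in[OF BP L(1)]] .
    have "conj_val (flip (lit_var L) (cOf B)) (B - {L})" using sat_minus_iff[OF BP cv fa L(1)] by simp
    then have "conj_val (flip (lit_var L) (cOf B)) Y" using YB by (auto simp: conj_val_def)
    then have "D (flip (lit_var L) (cOf B)) \<omega>" using sY fa by (auto simp: suff_cause_def)
    then have "flip (lit_var L) (cOf B) = cOf B" using h2 fa by blast
    then show False unfolding flip_def by (metis fun_upd_same)
  qed
  have msB: "min_suff_cause C D B \<omega>" using sB nsub by (simp add: min_suff_cause_def)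
  have "\<not> min_suff_cause C D B' \<omega>" if B': "B' \<in> Pdot C" "B' \<noteq> B" for B'
  proof
    assume m: "min_suff_cause C D B' \<omega>"
    then have s': "suff_cause C D B' \<omega>" by (simp add: min_suff_cause_def)
    then obtain c where c: "c \<in> asg C" "conj_val c B'" by (auto simp: suff_cause_def)
    then have "D c \<omega>" using s' by (auto simp: suff_cause_def)
    then have "c = cOf B" using h2 c by blast
    have "B' \<subseteq> B"
    proof
      fix L assume L: "L \<in> B'"
      then have v: "lit_var L \<in> C" using lit_var_in[OF B'(1)] by blast
      have "lit_val (cOf B) L" using c L \<open>c = cOf B\<close> by (auto simp: conj_val_def)
      moreover have "litB B (lit_var L) \<in> B" using litB_in[OF BP cv v] .
      moreover have "lit_val (cOf B) L \<Longrightarrow> L = litB B (lit_var L)"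
        by (cases L) (auto simp: litB_def)
      ultimately show "L \<in> B" by simp
    qed
    then have "B' \<subset> B" using B'(2) by auto
    then show False using nsub s' by blast
  qed
  then show ?thesis using msB by (simp add: singular_for_def)
qed


theorem mainTheorem17:
  fixes C :: "'v set" and \<Omega> :: "'w set" and D :: "('v \<Rightarrow> bool) \<Rightarrow> 'w \<Rightarrow> bool"
    and B :: "'v lit set"
  assumes "finite C"
    and "B \<in> Pdot C"
    and "card B = card C"
    and "(\<forall>L\<in>B. pos_mono C \<Omega> D L) \<or> (\<exists>L0\<in>B. \<forall>L\<in>B - {L0}. pos_mono C \<Omega> D L)"
  shows "singular C \<Omega> D B \<longleftrightarrow> irreducible C \<Omega> D B"
proof -
  note fC = assms(1) and BP = assms(2)
  have cv: "cov C B" using cover assms(1-3) by blast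
  have cB: "cOf B \<in> asg C" using cOf_asg[OF BP] .
  show ?thesis
  proof
    assume "singular C \<Omega> D B"
    then obtain \<omega> where om: "\<omega> \<in> \<Omega>" and sf: "singular_for C D B \<omega>" by (auto simp: singular_def)
    note ch = sing_to_char[OF fC BP cv sf]
    show "irreducible C \<Omega> D B" unfolding irreducible_def
    proof (intro allI impI)
      fix R assume R: "suff_rep C \<Omega> D R"
      then obtain A Bj where AB: "(A, Bj) \<in> set R" "A \<omega>" "conj_val (cOf B) Bj"
        using om cB ch(1) by (auto simp: suff_rep_def)
      have BjP: "Bj \<in> Pdot C" using R AB(1) by (auto simp: suff_rep_def)
      have only: "c = cOf B" if "c \<in> asg C" "conj_val c Bj" for c
      proof -
        have "D c \<omega>" using R om that AB by (auto simp: suff_rep_def)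
        then show ?thesis using ch(2) that(1) by blast
      qed
      have "B \<subseteq> Bj"
      proof (rule ccontr)
        assume "\<not> B \<subseteq> Bj"
        then obtain L where L: "L \<in> B" "L \<notin> Bj" by blast
        define v where "v = lit_var L"
        have vC: "v \<in> C" using lit_var_in[OF BP L(1)] v_def by simp
        have fa: "flip v (cOf B) \<in> asg C" using flip_asg[OF cB vC] .
        have "conj_val (flip v (cOf B)) Bj" unfolding conj_val_def
        proof
          fix L' assume L': "L' \<in> Bj"
          have t: "lit_val (cOf B) L'" using AB(3) L' by (auto simp: conj_val_def)
          show "lit_val (flip v (cOf B)) L'"
          proof (cases "lit_var L' = v")
            case False then show ?thesis using t by (cases L') (auto simp: flip_def)
          next
            case True
            have tL: "lit_val (cOf B) L" using cOf_sat[OF BP] L(1) by (auto simp: conj_val_def)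
            have "L' \<noteq> L" using L L' by auto
            then show ?thesis using True t tL v_def by (cases L; cases L') auto
          qed
        qed
        then have "flip v (cOf B) = cOf B" using only fa by blast
        then show False unfolding flip_def by (metis fun_upd_same)
      qed
      then show "\<exists>(A, B')\<in>set R. B \<subseteq> B'" using AB(1) by blast
    qed
  next
    assume irr: "irreducible C \<Omega> D B"
    show "singular C \<Omega> D B"
    proof (rule ccontr)
      assume ns: "\<not> singular C \<Omega> D B"
      have mh: "\<forall>v1\<in>C. \<forall>v2\<in>C. v1 \<noteq> v2 \<longrightarrow> pos_mono C \<Omega> D (litB B v1) \<or> pos_mono C \<Omega> D (litB B v2)"
      proof (intro ballI impI)
        fix v1 v2 assume v: "v1 \<in> C" "v2 \<in> C" "v1 \<noteq> v2"
        have i: "litB B v1 \<in> B" "litB B v2 \<in> B" using litB_in[OF BP cv] v by auto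
        have "litB B v1 \<noteq> litB B v2" using v(3) by (auto simp: litB_def)
        then show "pos_mono C \<Omega> D (litB B v1) \<or> pos_mono C \<Omega> D (litB B v2)"
          using assms(4) i by blast
      qed
      have key: "\<exists>L\<in>B. D (flip (lit_var L) (cOf B)) \<omega>" if om: "\<omega> \<in> \<Omega>" and d: "D (cOf B) \<omega>" for \<omega>
      proof (rule ccontr)
        assume nk: "\<not> (\<exists>L\<in>B. D (flip (lit_var L) (cOf B)) \<omega>)"
        have "\<forall>c\<in>asg C. D c \<omega> \<longrightarrow> c = cOf B"
          using dist[OF fC BP cv om mh] nk by blast
        then have "singular_for C D B \<omega>" using char_to_sing[of C B D \<omega>] fC BP cv d by blast
        then show False using ns om by (auto simp: singular_def)
      qed
      define S1 where "S1 = (\<lambda>c. (\<lambda>\<omega>. D c \<omega>, full C c)) ` (asg C - {cOf B})"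
      define S2 where "S2 = (\<lambda>L. (\<lambda>\<omega>. D (cOf B) \<omega> \<and> D (flip (lit_var L) (cOf B)) \<omega>, B - {L})) ` B"
      have finA: "finite (asg C)"
      proof -
        have "asg C \<subseteq> (\<lambda>S v. v \<in> S) ` Pow C"
        proof
          fix x assume "x \<in> asg C"
          then have e: "x = (\<lambda>v. v \<in> {v\<in>C. x v})" by (intro ext) (auto simp: asg_def)
          show "x \<in> (\<lambda>S v. v \<in> S) ` Pow C" by (rule image_eqI[where f="\<lambda>S v. v \<in> S" and x="{v\<in>C. x v}", OF e]) simp
        qed
        then show ?thesis using fC finite_subset by blast
      qed
      have finB: "finite B" using BP Lits_finite[OF fC] finite_subset by (auto simp: Pdot_def)
      have "finite (S1 \<union> S2)" using finA finB by (simp add: S1_def S2_def)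
      then obtain R where R: "set R = S1 \<union> S2" using finite_list by blast
      have rep: "suff_rep C \<Omega> D R" unfolding suff_rep_def
      proof (intro conjI ballI)
        fix x assume "x \<in> set R"
        then have "x \<in> S1 \<or> x \<in> S2" using R by simp
        then show "case x of (A, B) \<Rightarrow> B \<in> Pdot C"
        proof
          assume "x \<in> S1"
          then obtain c where "c \<in> asg C" "x = (\<lambda>\<omega>. D c \<omega>, full C c)" unfolding S1_def by blast
          then show ?thesis using full_props(1) by simp
        next
          assume "x \<in> S2"
          then obtain L where "x = (\<lambda>\<omega>. D (cOf B) \<omega> \<and> D (flip (lit_var L) (cOf B)) \<omega>, B - {L})" unfolding S2_def by blast
          then show ?thesis using Pdot_sub[OF BP, of "B - {L}"] by auto
        qed
      next
        fix \<omega> c assume om: "\<omega> \<in> \<Omega>" and c: "c \<in> asg C"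
        show "D c \<omega> \<longleftrightarrow> (\<exists>(A, B)\<in>set R. A \<omega> \<and> conj_val c B)"
        proof
          assume d: "D c \<omega>"
          show "\<exists>(A, B)\<in>set R. A \<omega> \<and> conj_val c B"
          proof (cases "c = cOf B")
            case True
            then obtain L where L: "L \<in> B" "D (flip (lit_var L) (cOf B)) \<omega>" using key om d by blast
            have cvl: "conj_val c (B - {L})" using sat_minus_iff[OF BP cv c L(1)] True by simp
            have mem: "(\<lambda>\<omega>. D (cOf B) \<omega> \<and> D (flip (lit_var L) (cOf B)) \<omega>, B - {L}) \<in> set R"
              using R L(1) by (auto simp: S2_def)
            show ?thesis by (rule bexI[OF _ mem]) (use cvl L(2) d True in simp)
          next
            case False
            have mem: "(\<lambda>\<omega>. D c \<omega>, full C c) \<in> set R" using R c False by (auto simp: S1_def)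
            have cvl: "conj_val c (full C c)" using full_sat_iff[OF c c] by simp
            show ?thesis by (rule bexI[OF _ mem]) (use cvl d in simp)
          qed
        next
          assume "\<exists>(A, B)\<in>set R. A \<omega> \<and> conj_val c B"
          then obtain A Bj where AB: "(A, Bj) \<in> set R" "A \<omega>" "conj_val c Bj" by blast
          then have "(A, Bj) \<in> S1 \<or> (A, Bj) \<in> S2" using R by auto
          then show "D c \<omega>"
          proof
            assume "(A, Bj) \<in> S1"
            then obtain c' where c': "c' \<in> asg C" "A = (\<lambda>\<omega>. D c' \<omega>)" "Bj = full C c'"
              by (auto simp: S1_def)
            then have "c = c'" using full_sat_iff[OF c'(1) c] AB(3) by simp
            then show ?thesis using AB(2) c' by simp
          next
            assume "(A, Bj) \<in> S2"
            then obtain L where L: "L \<in> B" "A = (\<lambda>\<omega>. D (cOf B) \<omega> \<and> D (flip (lit_var L) (cOf B)) \<omega>)"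
              "Bj = B - {L}" by (auto simp: S2_def)
            then have "c = cOf B \<or> c = flip (lit_var L) (cOf B)"
              using sat_minus_iff[OF BP cv c L(1)] AB(3) by simp
            then show ?thesis using AB(2) L(2) by auto
          qed
        qed
      qed
      have "\<not> (\<exists>(A, B')\<in>set R. B \<subseteq> B')"
      proof
        assume "\<exists>(A, B')\<in>set R. B \<subseteq> B'"
        then obtain A Bj where AB: "(A, Bj) \<in> set R" "B \<subseteq> Bj" by blast
        then have "(A, Bj) \<in> S1 \<or> (A, Bj) \<in> S2" using R by auto
        then show False
        proof
          assume "(A, Bj) \<in> S1"
          then obtain c' where c': "c' \<in> asg C" "c' \<noteq> cOf B" "Bj = full C c'"
            by (auto simp: S1_def)
          have "conj_val c' (full C c')" using full_sat_iff[OF c'(1) c'(1)] by simp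
          then have "conj_val c' B" using AB(2) c'(3) by (auto simp: conj_val_def)
          then show False using sat_iff[OF BP cv c'(1)] c'(2) by simp
        next
          assume "(A, Bj) \<in> S2"
          then obtain L where "L \<in> B" "Bj = B - {L}" by (auto simp: S2_def)
          then show False using AB(2) by auto
        qed
      qed
      then show False using irr rep by (auto simp: irreducible_def)
    qed
  qed
qed

end
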